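(* Let $A \in \mathbb{C}^{N \times N}$ have an orthonormal basis of eigenvectors $\psi_1,\ldots,\psi_N$ with eigenvalues $\lambda_1,\ldots,\lambda_N$ ordered so that $|\lambda_1| > |\lambda_2| \ge |\lambda_3| \ge \cdots \ge |\lambda_N|$. Let $v \in \mathbb{C}^N$ with $\|v\| = 1$, let $e \in \mathbb{C}^N$ be arbitrary, and let $\theta = \measuredangle(v,\psi_1)$. If $$\frac{\|e\|}{|\lambda_1|} < \left(1 - \left|\frac{\lambda_2}{\lambda_1}\right|\right)\frac{\cos(\theta)\sin(\theta)}{\cos(\theta)+\sin(\theta)},$$ then $\measuredangle(Av+e,\psi_1) < \measuredangle(v,\psi_1)$.
   Context: $\|\cdot\|$ is the Euclidean norm. For nonzero $x,y \in \mathbb{C}^N$, the angle $\measuredangle(x,y)\in[0,\pi/2]$ is defined by $\cos\measuredangle(x,y) = |\langle x, y\rangle|/(\|x\|\,\|y\|)$; equivalently, with $\mathcal{P} = \psi_1\psi_1^{*}$ and $\mathcal{P}_\perp = I - \mathcal{P}$, one has $\tan\measuredangle(x,\psi_1) = \|\mathcal{P}_\perp x\|/\|\mathcal{P} x\|$. The vector $e$ models an arbitrary perturbation (e.g. a truncation error) of the product $Av$ in one step of inexact power iteration. *)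

theory Defs
  imports "HOL-Analysis.Analysis"
begin

definition cinner :: "complex ^ 'n \<Rightarrow> complex ^ 'n \<Rightarrow> complex" where
  "cinner x y = (\<Sum>i\<in>UNIV. cnj (x $ i) * y $ i)"

definition vangle :: "complex ^ 'n \<Rightarrow> complex ^ 'n \<Rightarrow> real" where
  "vangle x y = arccos (cmod (cinner x y) / (norm x * norm y))"

end

theory Submission
  imports Defs
begin

lemma cinner_add_right: "cinner x (y + z) = cinner x y + cinner x z"
  by (simp add: cinner_def distrib_left sum.distrib)
lemma cinner_add_left: "cinner (x + y) z = cinner x z + cinner y z"
  by (simp add: cinner_def distrib_right sum.distrib)
lemma cinner_diff_right: "cinner x (y - z) = cinner x y - cinner x z"
  by (simp add: cinner_def right_diff_distrib sum_subtractf)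
lemma cinner_diff_left: "cinner (x - y) z = cinner x z - cinner y z"
  by (simp add: cinner_def left_diff_distrib sum_subtractf)
lemma cinner_scale_right: "cinner x (c *s y) = c * cinner x y"
  by (simp add: cinner_def sum_distrib_left algebra_simps)
lemma cinner_scale_left: "cinner (c *s x) y = cnj c * cinner x y"
  by (simp add: cinner_def sum_distrib_left algebra_simps)
lemma cinner_zero_right[simp]: "cinner x 0 = 0" by (simp add: cinner_def)
lemma cinner_zero_left[simp]: "cinner 0 x = 0" by (simp add: cinner_def)
lemma cinner_sum_right: "finite S \<Longrightarrow> cinner x (\<Sum>k\<in>S. f k) = (\<Sum>k\<in>S. cinner x (f k))"
  by (induction S rule: finite_induct) (auto simp: cinner_add_right)
lemma cinner_sum_left: "finite S \<Longrightarrow> cinner (\<Sum>k\<in>S. f k) x = (\<Sum>k\<in>S. cinner (f k) x)"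
  by (induction S rule: finite_induct) (auto simp: cinner_add_left)
lemma cinner_cnj: "cinner y x = cnj (cinner x y)"
  by (simp add: cinner_def mult.commute)
lemma cinner_self: "cinner x x = complex_of_real (norm x ^ 2)"
proof -
  have "norm x ^ 2 = (\<Sum>i\<in>UNIV. (cmod (x $ i))^2)"
    unfolding norm_vec_def L2_set_def by (simp add: sum_nonneg)
  then have "complex_of_real (norm x ^ 2) = (\<Sum>i\<in>UNIV. complex_of_real ((cmod (x $ i))^2))"
    by simp
  also have "\<dots> = (\<Sum>i\<in>UNIV. cnj (x $ i) * x $ i)"
    by (rule sum.cong, simp, subst complex_norm_square, simp add: mult.commute)
  finally show ?thesis unfolding cinner_def by simp
qed
lemma expansion:
  fixes psi :: "nat \<Rightarrow> complex ^ 'n" and x :: "complex ^ 'n"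
  assumes orth: "\<And>i j. i < CARD('n) \<Longrightarrow> j < CARD('n) \<Longrightarrow>
                         cinner (psi i) (psi j) = (if i = j then 1 else 0)"
  shows "x = (\<Sum>k<CARD('n). cinner (psi k) x *s psi k)"
proof -
  obtain h where h: "bij_betw h {0..<CARD('n)} (UNIV::'n set)"
    using ex_bij_betw_nat_finite[of "UNIV::'n set"] by auto
  define g where "g = inv_into {0..<CARD('n)} h"
  have g: "bij_betw g (UNIV::'n set) {0..<CARD('n)}"
    unfolding g_def by (rule bij_betw_inv_into[OF h])
  have gl: "g k < CARD('n)" for k using g by (auto simp: bij_betw_def)
  have ginj: "g k = g l \<longleftrightarrow> k = l" for k l using g by (auto simp: bij_betw_def inj_on_def)
  define U :: "complex^'n^'n" where "U = (\<chi> j k. psi (g k) $ j)"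
  define V :: "complex^'n^'n" where "V = (\<chi> k j. cnj (psi (g k) $ j))"
  have "V ** U = mat 1"
  proof -
    have "(V ** U) $ k $ l = (if k = l then 1 else 0)" for k l
    proof -
      have "(V ** U) $ k $ l = cinner (psi (g k)) (psi (g l))"
        by (simp add: matrix_matrix_mult_def U_def V_def cinner_def)
      also have "\<dots> = (if k = l then 1 else 0)" using orth[OF gl gl] ginj by simp
      finally show ?thesis .
    qed
    then show ?thesis by (simp add: vec_eq_iff mat_def)
  qed
  then have UV: "U ** V = mat 1" by (simp add: matrix_left_right_inverse)
  have "x = U *v (V *v x)"
    by (simp add: matrix_vector_mul_assoc UV)
  then have e1: "x $ j = (\<Sum>k\<in>UNIV. cinner (psi (g k)) x * psi (g k) $ j)" for j
  proof -
    have "x $ j = (U *v (V *v x)) $ j" using \<open>x = U *v (V *v x)\<close> by simp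
    also have "\<dots> = (\<Sum>k\<in>UNIV. psi (g k) $ j * cinner (psi (g k)) x)"
      unfolding matrix_vector_mult_def U_def V_def cinner_def by simp
    finally show ?thesis by (simp add: mult.commute)
  qed
  have e2: "(\<Sum>k\<in>UNIV. cinner (psi (g k)) x * psi (g k) $ j) = (\<Sum>m\<in>{0..<CARD('n)}. cinner (psi m) x * psi m $ j)" for j
    using sum.reindex_bij_betw[OF g, of "\<lambda>m. cinner (psi m) x * psi m $ j"] by simp
  show ?thesis using e1 e2
    by (simp add: vec_eq_iff sum_component lessThan_atLeast0)
qed

lemma cnj_mult_self: "cnj a * a = complex_of_real (cmod a ^ 2)"
  by (metis complex_norm_square mult.commute)

lemma matvec_sum: "finite S \<Longrightarrow> (A::complex^'n^'m) *v (\<Sum>k\<in>S. f k) = (\<Sum>k\<in>S. A *v f k)"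
  by (induction S rule: finite_induct) (auto simp: matrix_vector_right_distrib)

lemma pythag:
  fixes u x :: "complex ^ 'n"
  assumes u: "norm u = 1"
  shows "norm x ^ 2 = cmod (cinner u x) ^ 2 + norm (x - cinner u x *s u) ^ 2"
proof -
  define a where "a = cinner u x"
  define p where "p = x - a *s u"
  have uu: "cinner u u = 1" using u by (simp add: cinner_self)
  have up: "cinner u p = 0" by (simp add: p_def cinner_diff_right cinner_scale_right uu a_def)
  have pu: "cinner p u = 0" using up cinner_cnj[of p u] by simp
  have x: "x = p + a *s u" by (simp add: p_def)
  have "complex_of_real (norm x ^ 2) = cinner (p + a *s u) (p + a *s u)"
    by (simp add: cinner_self x[symmetric])
  also have "\<dots> = cinner p p + cnj a * a"
    by (simp add: cinner_add_left cinner_add_right cinner_scale_left cinner_scale_right up pu uu)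
  also have "\<dots> = complex_of_real (norm p ^ 2 + cmod a ^ 2)"
    by (simp only: cinner_self cnj_mult_self of_real_add)
  finally show ?thesis unfolding p_def a_def by (simp only: of_real_eq_iff)
qed

lemma combo_inner:
  fixes psi :: "nat \<Rightarrow> complex ^ 'n"
  assumes orth: "\<And>i j. i < N \<Longrightarrow> j < N \<Longrightarrow> cinner (psi i) (psi j) = (if i = j then 1 else 0)"
    and m: "m < N"
  shows "cinner (psi m) (\<Sum>k<N. al k *s psi k) = al m"
proof -
  have "cinner (psi m) (\<Sum>k<N. al k *s psi k) = (\<Sum>k<N. al k * (if m = k then 1 else 0))"
    by (simp add: cinner_sum_right cinner_scale_right orth m)
  also have "\<dots> = (\<Sum>k<N. if m = k then al k else 0)" by (rule sum.cong) auto
  also have "\<dots> = al m" using m by simp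
  finally show ?thesis .
qed

lemma combo_norm:
  fixes psi :: "nat \<Rightarrow> complex ^ 'n"
  assumes orth: "\<And>i j. i < N \<Longrightarrow> j < N \<Longrightarrow> cinner (psi i) (psi j) = (if i = j then 1 else 0)"
  shows "norm (\<Sum>k<N. al k *s psi k) ^ 2 = (\<Sum>k<N. cmod (al k) ^ 2)"
proof -
  have "complex_of_real (norm (\<Sum>k<N. al k *s psi k) ^ 2) = cinner (\<Sum>k<N. al k *s psi k) (\<Sum>k<N. al k *s psi k)"
    by (simp add: cinner_self)
  also have "\<dots> = (\<Sum>k<N. cnj (al k) * al k)"
    by (simp add: cinner_sum_left cinner_scale_left combo_inner[OF orth])
  also have "\<dots> = complex_of_real (\<Sum>k<N. cmod (al k) ^ 2)"
    by (simp only: cnj_mult_self of_real_sum)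
  finally show ?thesis by (simp only: of_real_eq_iff)
qed

theorem theorem2:
  fixes A :: "complex ^ 'n ^ 'n"
    and psi :: "nat \<Rightarrow> complex ^ 'n"
    and lam :: "nat \<Rightarrow> complex"
    and v e :: "complex ^ 'n"
  assumes N2: "CARD('n) \<ge> 2"
    and orthonormal: "\<And>i j. i < CARD('n) \<Longrightarrow> j < CARD('n) \<Longrightarrow>
                         cinner (psi i) (psi j) = (if i = j then 1 else 0)"
    and eigen: "\<And>i. i < CARD('n) \<Longrightarrow> A *v psi i = lam i *s psi i"
    and dominant: "cmod (lam 0) > cmod (lam 1)"
    and ordered: "\<And>i j. 1 \<le> i \<Longrightarrow> i \<le> j \<Longrightarrow> j < CARD('n) \<Longrightarrow> cmod (lam j) \<le> cmod (lam i)"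
    and v_unit: "norm v = 1"
    and small: "norm e / cmod (lam 0)
                 < (1 - cmod (lam 1 / lam 0)) *
                   (cos (vangle v (psi 0)) * sin (vangle v (psi 0)) /
                    (cos (vangle v (psi 0)) + sin (vangle v (psi 0))))"
  shows "vangle (A *v v + e) (psi 0) < vangle v (psi 0)"
proof -
  define N where "N = CARD('n)"
  have N0: "0 < N" and N1: "1 < N" using N2 unfolding N_def by auto
  have orth: "\<And>i j. i < N \<Longrightarrow> j < N \<Longrightarrow> cinner (psi i) (psi j) = (if i = j then 1 else 0)"
    using orthonormal unfolding N_def by blast
  define c where "c k = cinner (psi k) v" for k
  define L0 where "L0 = cmod (lam 0)"
  define L1 where "L1 = cmod (lam 1)"
  define ee where "ee = norm e"
  have L1nn: "0 \<le> L1" unfolding L1_def by simp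
  have L0pos: "0 < L0" using dominant L1nn unfolding L0_def L1_def by linarith
  have een: "0 \<le> ee" unfolding ee_def by simp
  have psi0n: "norm (psi 0) = 1"
  proof -
    have "complex_of_real (norm (psi 0) ^ 2) = 1" using orth[OF N0 N0] by (simp add: cinner_self)
    then have "norm (psi 0) ^ 2 = 1" by (metis of_real_1 of_real_eq_iff)
    then show ?thesis using norm_ge_zero[of "psi 0"] by (auto simp: power2_eq_1_iff)
  qed
  have vexp: "v = (\<Sum>k<N. c k *s psi k)"
    unfolding c_def N_def by (rule expansion[OF orthonormal])
  have Avexp: "A *v v = (\<Sum>k<N. (lam k * c k) *s psi k)"
  proof -
    have "A *v v = (\<Sum>k<N. A *v (c k *s psi k))" by (subst vexp) (simp add: matvec_sum)
    also have "\<dots> = (\<Sum>k<N. (lam k * c k) *s psi k)"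
      by (rule sum.cong) (auto simp: vector_scalar_commute eigen N_def mult.commute)
    finally show ?thesis .
  qed
  have normv: "(\<Sum>k<N. cmod (c k) ^ 2) = 1"
    using combo_norm[where N=N and psi=psi, OF orth, where al=c] vexp v_unit by simp
  have normAv: "norm (A *v v) ^ 2 = (\<Sum>k<N. cmod (lam k * c k) ^ 2)"
    using combo_norm[where N=N and psi=psi, OF orth, where al="\<lambda>k. lam k * c k"] Avexp by simp
  have Av0: "cinner (psi 0) (A *v v) = lam 0 * c 0"
    using combo_inner[where N=N and psi=psi and m=0, OF orth N0, where al="\<lambda>k. lam k * c k"] Avexp by simp
  define cc where "cc = cmod (c 0)"
  define s where "s = norm (v - c 0 *s psi 0)"
  have ccs: "cc ^ 2 + s ^ 2 = 1"
    using pythag[OF psi0n, of v] v_unit unfolding cc_def s_def c_def by simp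
  have snn: "0 \<le> s" unfolding s_def by simp
  have ccnn: "0 \<le> cc" unfolding cc_def by simp
  have sumb: "(\<Sum>k<N. cmod (lam k * c k) ^ 2) \<le> (L0 * cc) ^ 2 + L1 ^ 2 * s ^ 2"
  proof -
    have "(\<Sum>k<N. cmod (lam k * c k) ^ 2) = cmod (lam 0 * c 0) ^ 2 + (\<Sum>k\<in>{..<N} - {0}. cmod (lam k * c k) ^ 2)"
      using N0 by (subst sum.remove[of _ 0]) auto
    also have "(\<Sum>k\<in>{..<N} - {0}. cmod (lam k * c k) ^ 2) \<le> (\<Sum>k\<in>{..<N} - {0}. L1 ^ 2 * cmod (c k) ^ 2)"
    proof (rule sum_mono)
      fix k assume k: "k \<in> {..<N} - {0}"
      then have "cmod (lam k) \<le> L1" unfolding L1_def using ordered[of 1 k] N_def by auto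
      then have "cmod (lam k) ^ 2 \<le> L1 ^ 2" by (simp add: power_mono)
      then show "cmod (lam k * c k) ^ 2 \<le> L1 ^ 2 * cmod (c k) ^ 2"
        by (simp add: norm_mult power_mult_distrib mult_right_mono)
    qed
    also have "(\<Sum>k\<in>{..<N} - {0}. L1 ^ 2 * cmod (c k) ^ 2) = L1 ^ 2 * (1 - cc ^ 2)"
    proof -
      have "(\<Sum>k<N. cmod (c k) ^ 2) = cmod (c 0) ^ 2 + (\<Sum>k\<in>{..<N} - {0}. cmod (c k) ^ 2)"
        using N0 by (subst sum.remove[of _ 0]) auto
      then show ?thesis using normv by (simp add: sum_distrib_left[symmetric] cc_def)
    qed
    also have "1 - cc ^ 2 = s ^ 2" using ccs by simp
    finally show ?thesis by (simp add: L0_def cc_def norm_mult power_mult_distrib)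
  qed
  define PAv where "PAv = A *v v - (lam 0 * c 0) *s psi 0"
  have PAv2: "norm PAv ^ 2 \<le> (L1 * s) ^ 2"
  proof -
    have "norm (A *v v) ^ 2 = cmod (lam 0 * c 0) ^ 2 + norm PAv ^ 2"
      using pythag[OF psi0n, of "A *v v"] unfolding PAv_def Av0 .
    then show ?thesis using sumb normAv by (simp add: L0_def cc_def norm_mult power_mult_distrib)
  qed
  have PAvb: "norm PAv \<le> L1 * s"
    using PAv2 L1nn snn by (meson power2_le_imp_le mult_nonneg_nonneg)
  define d0 where "d0 = cinner (psi 0) e"
  define Pe where "Pe = e - d0 *s psi 0"
  have pe: "norm e ^ 2 = cmod d0 ^ 2 + norm Pe ^ 2"
    using pythag[OF psi0n, of e] unfolding d0_def Pe_def .
  have Peb: "norm Pe \<le> ee"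
    proof -
    have "norm Pe ^ 2 \<le> ee ^ 2" using pe unfolding ee_def by simp
    then show ?thesis using een by (rule power2_le_imp_le)
  qed
  have d0b: "cmod d0 \<le> ee"
    proof -
    have "cmod d0 ^ 2 \<le> ee ^ 2" using pe unfolding ee_def by simp
    then show ?thesis using een by (rule power2_le_imp_le)
  qed
  define w where "w = A *v v + e"
  have w0: "cinner (psi 0) w = lam 0 * c 0 + d0"
    unfolding w_def d0_def by (simp add: cinner_add_right Av0)
  have Pw: "w - cinner (psi 0) w *s psi 0 = PAv + Pe"
  proof -
    have "w - cinner (psi 0) w *s psi 0 = w - (lam 0 * c 0 + d0) *s psi 0" using w0 by simp
    also have "\<dots> = PAv + Pe" unfolding PAv_def Pe_def w_def by (simp add: vector_sadd_rdistrib algebra_simps)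
    finally show ?thesis .
  qed
  define a where "a = cmod (cinner (psi 0) w)"
  define b where "b = norm (w - cinner (psi 0) w *s psi 0)"
  have wab: "norm w ^ 2 = a ^ 2 + b ^ 2"
    using pythag[OF psi0n, of w] unfolding a_def b_def .
  have bb: "b \<le> L1 * s + ee"
    unfolding b_def Pw using norm_triangle_ineq[of PAv Pe] PAvb Peb by linarith
  have ab: "L0 * cc - ee \<le> a"
  proof -
    have "cmod (lam 0 * c 0) - cmod d0 \<le> a"
      unfolding a_def w0 by (metis norm_diff_ineq norm_minus_cancel add.commute diff_minus_eq_add norm_triangle_ineq2 order_trans)
    then show ?thesis using d0b by (simp add: L0_def cc_def norm_mult)
  qed
  have bnn: "0 \<le> b" unfolding b_def by simp
  have ann: "0 \<le> a" unfolding a_def by simp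
  have cc1: "cc \<le> 1" proof -
    have "0 \<le> s ^ 2" by simp
    then have "cc ^ 2 \<le> 1" using ccs by linarith
    then have "cc ^ 2 \<le> 1 ^ 2" by simp
    then show ?thesis by (rule power2_le_imp_le) simp
  qed
  have th: "vangle v (psi 0) = arccos cc"
    unfolding vangle_def cc_def c_def using v_unit psi0n by (simp add: cinner_cnj[of v])
  have cos_th: "cos (vangle v (psi 0)) = cc" using th ccnn cc1 by simp
  have sin_th: "sin (vangle v (psi 0)) = s"
  proof -
    have "sin (vangle v (psi 0)) = sqrt (1 - cc ^ 2)" using th ccnn cc1 by (simp add: sin_arccos)
    also have "1 - cc ^ 2 = s ^ 2" using ccs by simp
    finally show ?thesis using snn by simp
  qed
  have cspos: "0 < cc + s"
  proof (rule ccontr)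
    assume "\<not> 0 < cc + s"
    then have "cc = 0" "s = 0" using ccnn snn by auto
    then show False using ccs by simp
  qed
  have hyp: "ee * (cc + s) < (L0 - L1) * (cc * s)"
  proof -
    have "ee / L0 < (1 - L1 / L0) * (cc * s / (cc + s))"
      using small unfolding cos_th sin_th by (simp add: L0_def L1_def ee_def norm_divide)
    also have "(1 - L1 / L0) * (cc * s / (cc + s)) = ((L0 - L1) * (cc * s) / (cc + s)) / L0"
      using L0pos cspos by (simp add: field_simps)
    finally have "ee / L0 < ((L0 - L1) * (cc * s) / (cc + s)) / L0" .
    then have "ee < (L0 - L1) * (cc * s) / (cc + s)" using L0pos divide_strict_right_mono[of _ _ L0] by (metis divide_less_cancel)
    then show ?thesis using cspos by (simp add: pos_less_divide_eq)
  qed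
  have L01: "0 < L0 - L1" using dominant unfolding L0_def L1_def by simp
  have css: "0 < cc * s"
  proof -
    have "0 \<le> ee * (cc + s)" using een cspos by simp
    then have "0 < (L0 - L1) * (cc * s)" using hyp by linarith
    then show ?thesis using L01 by (simp add: zero_less_mult_iff)
  qed
  have spos: "0 < s" and ccpos: "0 < cc" using css ccnn snn by (auto simp: zero_less_mult_iff)
  have cb: "cc * b < s * a"
  proof -
    have "cc * b \<le> cc * (L1 * s + ee)" using bb ccnn by (rule mult_left_mono)
    also have "\<dots> < s * (L0 * cc - ee)" using hyp by (simp add: algebra_simps)
    also have "\<dots> \<le> s * a" using ab snn by (rule mult_left_mono)
    finally show ?thesis .
  qed
  have apos: "0 < a"
  proof -
    have "ee * s \<le> ee * (cc + s)" using een ccnn by (simp add: mult_left_mono)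
    also have "\<dots> < (L0 - L1) * (cc * s)" by (rule hyp)
    also have "\<dots> \<le> L0 * cc * s" using L1nn ccnn snn by (simp add: algebra_simps)
    finally have "ee < L0 * cc" using spos by simp
    then show ?thesis using ab by linarith
  qed
  have aw: "a \<le> norm w" proof -
    have "a ^ 2 \<le> norm w ^ 2" using wab by simp
    then show ?thesis by (rule power2_le_imp_le) simp
  qed
  have wpos: "0 < norm w" using aw apos by linarith
  have "(cc * norm w) ^ 2 < a ^ 2"
  proof -
    have "(cc * norm w) ^ 2 = cc ^ 2 * a ^ 2 + (cc * b) ^ 2" using wab by (simp add: algebra_simps power_mult_distrib)
    also have "\<dots> < cc ^ 2 * a ^ 2 + (s * a) ^ 2"
      using cb ccnn bnn by (simp add: power_strict_mono)
    also have "\<dots> = a ^ 2 * (cc ^ 2 + s ^ 2)" by (simp add: algebra_simps power_mult_distrib)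
    finally show ?thesis using ccs by simp
  qed
  then have "cc * norm w < a" using ann by (rule power_less_imp_less_base)
  then have lt: "cc < a / norm w" using wpos by (simp add: field_simps)
  have le1: "a / norm w \<le> 1" using aw wpos by simp
  have thw: "vangle w (psi 0) = arccos (a / norm w)"
    unfolding vangle_def a_def using psi0n by (simp add: cinner_cnj[of w])
  show ?thesis
    unfolding w_def[symmetric] thw th
    using arccos_less_arccos[of cc "a / norm w"] ccnn lt le1 by simp
qed
end
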